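(* Let $d,a\in\mathbb{N}$ with $d,a\ge 1$, and let $G=(V,E)$ be a $d$-degenerate graph of maximum degree $\Delta=2da$ whose edges have distinct arrival times. Fix an ordering $v_1,\dots,v_n$ of $V$ in which each $v_i$ has at most $d$ neighbors among $v_1,\dots,v_{i-1}$. Run the following process: start with $E_1=\dots=E_a=\emptyset$; for $i=1,\dots,n$, process the front-edges at $v_i$ in increasing order of arrival time; when processing such an edge $e$, let $J(e)=\{j\in\{1,\dots,a\}: |E_j\cap \mathrm{Prev}(e,v_i)|\le 2d-1\}$, let $j'$ be the least index with $|E_{j'}\cap E(v_i)|\le 2d-1$, and add $e$ to $E_{j'}$. Then at every step: (i) such an index $j'$ exists, and adding $e$ to $E_{j'}$ keeps the maximum degree of $(V,E_{j'})$ at most $2d$ (so at the end $E_1,\dots,E_a$ partition $E$ with each $(V,E_j)$ of maximum degree at most $2d$); and (ii) $j'\in J(e)$ and $j'$ is among the $d+1$ smallest elements of $J(e)$, i.e. $|\{j\in J(e): j<j'\}|\le d$.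
   Context: All graphs are simple. For the ordering $v_1,\dots,v_n$, an edge $(v_i,v_k)$ with $i<k$ is a front-edge at $v_i$ and a back-edge at $v_k$. $E(v)$ denotes the set of edges incident to $v$, and $\mathrm{Prev}(e,v)$ denotes the set of edges in $E(v)$ that arrive (strictly) before $e$. A graph is $d$-degenerate if its vertices can be ordered so that each vertex has at most $d$ neighbors earlier in the order. *)

theory Defs
  imports Main
begin

definition simple_graph :: "'a set \<Rightarrow> 'a set set \<Rightarrow> bool" where
  "simple_graph V E \<longleftrightarrow> finite V \<and> E \<subseteq> {{u, w} | u w. u \<in> V \<and> w \<in> V \<and> u \<noteq> w}"

definition inc :: "'a set set \<Rightarrow> 'a \<Rightarrow> 'a set set" where
  "inc E v = {f \<in> E. v \<in> f}"

definition degree :: "'a set set \<Rightarrow> 'a \<Rightarrow> nat" where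
  "degree E v = card (inc E v)"

definition max_degree :: "'a set \<Rightarrow> 'a set set \<Rightarrow> nat" where
  "max_degree V E = Max (degree E ` V)"

definition Prev :: "'a set set \<Rightarrow> ('a set \<Rightarrow> 'b::linorder) \<Rightarrow> 'a set \<Rightarrow> 'a \<Rightarrow> 'a set set" where
  "Prev E t e v = {f \<in> inc E v. t f < t e}"

definition degenerate_order :: "'a list \<Rightarrow> 'a set set \<Rightarrow> nat \<Rightarrow> bool" where
  "degenerate_order vs E d \<longleftrightarrow>
     (\<forall>i < length vs. card {j. j < i \<and> {vs ! i, vs ! j} \<in> E} \<le> d)"

text \<open>Position of the earlier endpoint of an edge, and that endpoint itself
  (the vertex at which the edge is a front-edge).\<close>
definition pos :: "'a list \<Rightarrow> 'a \<Rightarrow> nat" where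
  "pos vs v = (LEAST i. i < length vs \<and> vs ! i = v)"

definition low_idx :: "'a list \<Rightarrow> 'a set \<Rightarrow> nat" where
  "low_idx vs e = Min (pos vs ` e)"

definition low_v :: "'a list \<Rightarrow> 'a set \<Rightarrow> 'a" where
  "low_v vs e = vs ! low_idx vs e"

definition processing_order :: "'a list \<Rightarrow> ('a set \<Rightarrow> 'b::linorder) \<Rightarrow> 'a set set \<Rightarrow> 'a set list \<Rightarrow> bool" where
  "processing_order vs t E es \<longleftrightarrow> distinct es \<and> set es = E \<and>
     (\<forall>p q. p < q \<and> q < length es \<longrightarrow>
        low_idx vs (es ! p) < low_idx vs (es ! q) \<or>
        (low_idx vs (es ! p) = low_idx vs (es ! q) \<and> t (es ! p) < t (es ! q)))"

text \<open>The index j' chosen when processing edge e in state S (S j = E_j).\<close>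
definition choice :: "'a list \<Rightarrow> 'a set set \<Rightarrow> nat \<Rightarrow> nat \<Rightarrow> (nat \<Rightarrow> 'a set set) \<Rightarrow> 'a set \<Rightarrow> nat" where
  "choice vs E d a S e =
     (LEAST j. 1 \<le> j \<and> j \<le> a \<and> card (S j \<inter> inc E (low_v vs e)) \<le> 2 * d - 1)"

definition step :: "'a list \<Rightarrow> 'a set set \<Rightarrow> nat \<Rightarrow> nat \<Rightarrow> (nat \<Rightarrow> 'a set set) \<Rightarrow> 'a set \<Rightarrow> (nat \<Rightarrow> 'a set set)" where
  "step vs E d a S e = (let j' = choice vs E d a S e in S(j' := insert e (S j')))"

definition state :: "'a list \<Rightarrow> 'a set set \<Rightarrow> nat \<Rightarrow> nat \<Rightarrow> 'a set list \<Rightarrow> nat \<Rightarrow> (nat \<Rightarrow> 'a set set)" where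
  "state vs E d a es k = foldl (step vs E d a) (\<lambda>_. {}) (take k es)"

definition Jset :: "'a list \<Rightarrow> 'a set set \<Rightarrow> ('a set \<Rightarrow> 'b::linorder) \<Rightarrow> nat \<Rightarrow> nat \<Rightarrow> (nat \<Rightarrow> 'a set set) \<Rightarrow> 'a set \<Rightarrow> nat set" where
  "Jset vs E t d a S e = {j. 1 \<le> j \<and> j \<le> a \<and> card (S j \<inter> Prev E t e (low_v vs e)) \<le> 2 * d - 1}"

end

theory Submission imports Defs begin

definition inv_st :: "'a set \<Rightarrow> nat \<Rightarrow> nat \<Rightarrow> 'a set set \<Rightarrow> (nat \<Rightarrow> 'a set set) \<Rightarrow> bool" where
  "inv_st V a d T S \<longleftrightarrow> (\<forall>j. S j \<subseteq> T) \<and> (\<forall>j. S j \<noteq> {} \<longrightarrow> 1 \<le> j \<and> j \<le> a)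
     \<and> (\<Union>j\<in>{1..a}. S j) = T \<and> (\<forall>i j. i \<noteq> j \<longrightarrow> S i \<inter> S j = {})
     \<and> (\<forall>j. \<forall>u\<in>V. degree (S j) u \<le> 2 * d)"

lemma in_take: "f \<in> set (take k xs) \<Longrightarrow> \<exists>p<k. p < length xs \<and> xs ! p = f"
  by (auto simp: in_set_conv_nth)

lemma card_insert_le': "finite A \<Longrightarrow> card (insert x A) \<le> Suc (card A)"
  by (simp add: card_insert_if)

context
  fixes V :: "'a set" and E :: "'a set set" and vs :: "'a list"
    and t :: "'a set \<Rightarrow> 'b::linorder" and d a :: nat and es :: "'a set list"
  assumes d1: "d \<ge> 1" and a1: "a \<ge> 1"
    and sg: "simple_graph V E"
    and md: "max_degree V E = 2 * d * a"
    and tinj: "inj_on t E"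
    and dvs: "distinct vs" and svs: "set vs = V"
    and dego: "degenerate_order vs E d"
    and po: "processing_order vs t E es"
begin

lemma finV: "finite V" using sg by (simp add: simple_graph_def)

lemma edgeE: "e \<in> E \<Longrightarrow> \<exists>x y. e = {x,y} \<and> x \<noteq> y \<and> x \<in> V \<and> y \<in> V"
proof -
  assume "e \<in> E"
  then have "e \<in> {{u, w} | u w. u \<in> V \<and> w \<in> V \<and> u \<noteq> w}" using sg unfolding simple_graph_def by blast
  then show ?thesis by blast
qed

lemma E_sub: "E \<subseteq> Pow V"
proof
  fix e assume "e \<in> E"
  then obtain x y where "e = {x,y}" "x \<in> V" "y \<in> V" using edgeE by blast
  then show "e \<in> Pow V" by simp
qed

lemma finE: "finite E" using E_sub finV by (meson finite_Pow_iff rev_finite_subset)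

lemma fin_inc: "finite (inc E v)" unfolding inc_def using finE by simp

lemma pos_prop: "x \<in> V \<Longrightarrow> pos vs x < length vs \<and> vs ! pos vs x = x"
proof -
  assume "x \<in> V"
  then have "\<exists>i. i < length vs \<and> vs ! i = x" using svs by (metis in_set_conv_nth)
  then show ?thesis unfolding pos_def by (rule LeastI_ex)
qed

lemma pos_nth: "i < length vs \<Longrightarrow> pos vs (vs ! i) = i"
  unfolding pos_def
  by (rule Least_equality) (use dvs nth_eq_iff_index_eq in auto)

lemma pos_inj: "x \<in> V \<Longrightarrow> y \<in> V \<Longrightarrow> pos vs x = pos vs y \<Longrightarrow> x = y"
  using pos_prop by metis

lemma low_facts: assumes "e \<in> E"
  shows "low_v vs e \<in> e \<and> pos vs (low_v vs e) = low_idx vs e \<and> (\<forall>x\<in>e. low_idx vs e \<le> pos vs x)"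
proof -
  obtain x y where e: "e = {x,y}" "x \<noteq> y" "x \<in> V" "y \<in> V" using edgeE assms by blast
  have "low_idx vs e \<in> pos vs ` e" unfolding low_idx_def using e by (intro Min_in) auto
  then obtain z where z: "z \<in> e" "pos vs z = low_idx vs e" by auto
  have zV: "z \<in> V" using z e by auto
  have "low_v vs e = z" unfolding low_v_def using z(2) pos_prop[OF zV] by simp
  moreover have "\<forall>x\<in>e. low_idx vs e \<le> pos vs x" unfolding low_idx_def using e by auto
  ultimately show ?thesis using z by auto
qed

lemma other: assumes "e \<in> E"
  shows "\<exists>w. e = {low_v vs e, w} \<and> w \<noteq> low_v vs e \<and> w \<in> V \<and> pos vs (low_v vs e) < pos vs w"
proof -
  obtain x y where e: "e = {x,y}" "x \<noteq> y" "x \<in> V" "y \<in> V" using edgeE assms by blast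
  have l: "low_v vs e \<in> e" "pos vs (low_v vs e) = low_idx vs e" "\<forall>x\<in>e. low_idx vs e \<le> pos vs x"
    using low_facts[OF assms] by auto
  have "pos vs x \<noteq> pos vs y" using pos_inj e by blast
  show ?thesis
  proof (cases "low_v vs e = x")
    case True
    then show ?thesis using e l \<open>pos vs x \<noteq> pos vs y\<close> by (intro exI[of _ y]) force
  next
    case False
    then have "low_v vs e = y" using l e by auto
    then show ?thesis using e l \<open>pos vs x \<noteq> pos vs y\<close> by (intro exI[of _ x]) force
  qed
qed

lemma back_bound: assumes "w \<in> V"
  shows "card {f \<in> E. w \<in> f \<and> low_idx vs f < pos vs w} \<le> d"
proof -
  let ?i = "pos vs w"
  let ?J = "{j. j < ?i \<and> {vs ! ?i, vs ! j} \<in> E}"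
  have pw: "?i < length vs" "vs ! ?i = w" using pos_prop assms by auto
  have sub: "{f \<in> E. w \<in> f \<and> low_idx vs f < pos vs w} \<subseteq> (\<lambda>j. {vs ! ?i, vs ! j}) ` ?J"
  proof
    fix f assume f: "f \<in> {f \<in> E. w \<in> f \<and> low_idx vs f < pos vs w}"
    then have fE: "f \<in> E" and wf: "w \<in> f" and lt: "low_idx vs f < pos vs w" by auto
    obtain u where u: "f = {low_v vs f, u}" "u \<noteq> low_v vs f" "u \<in> V" using other[OF fE] by blast
    have lf: "pos vs (low_v vs f) = low_idx vs f" using low_facts[OF fE] by auto
    have "low_v vs f \<noteq> w" using lf lt by auto
    then have "u = w" using wf u(1) by (metis insertE singletonD)
    have lv: "low_v vs f = vs ! low_idx vs f" unfolding low_v_def ..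
    have "f = {vs ! ?i, vs ! low_idx vs f}" using u \<open>u = w\<close> pw lv by auto
    moreover have "low_idx vs f \<in> ?J" using lt fE calculation by auto
    ultimately show "f \<in> (\<lambda>j. {vs ! ?i, vs ! j}) ` ?J" by blast
  qed
  have "card {f \<in> E. w \<in> f \<and> low_idx vs f < pos vs w} \<le> card ((\<lambda>j. {vs ! ?i, vs ! j}) ` ?J)"
    by (rule card_mono[OF _ sub]) auto
  also have "\<dots> \<le> card ?J" by (rule card_image_le) auto
  also have "\<dots> \<le> d" using dego pw unfolding degenerate_order_def by auto
  finally show ?thesis .
qed

lemma deg_bound: "v \<in> V \<Longrightarrow> card (inc E v) \<le> 2 * d * a"
proof -
  assume v: "v \<in> V"
  have "degree E v \<le> Max (degree E ` V)" using finV v by (intro Max_ge) auto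
  then show ?thesis using md unfolding max_degree_def degree_def by simp
qed

lemma es_facts: "distinct es" "set es = E"
  using po unfolding processing_order_def by auto

lemma es_order: "p < q \<Longrightarrow> q < length es \<Longrightarrow>
   low_idx vs (es ! p) < low_idx vs (es ! q) \<or>
        (low_idx vs (es ! p) = low_idx vs (es ! q) \<and> t (es ! p) < t (es ! q))"
  using po unfolding processing_order_def by auto

lemma state_Suc: "k < length es \<Longrightarrow> state vs E d a es (Suc k) = step vs E d a (state vs E d a es k) (es ! k)"
  unfolding state_def by (simp add: take_Suc_conv_app_nth)


lemma step_lemma:
  assumes k: "k < length es" and I: "inv_st V a d (set (take k es)) (state vs E d a es k)"
  shows "(let S = state vs E d a es k; e = es ! k; v = low_v vs e; j' = choice vs E d a S e in
          (\<exists>j. 1 \<le> j \<and> j \<le> a \<and> card (S j \<inter> inc E v) \<le> 2 * d - 1)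
          \<and> 1 \<le> j' \<and> j' \<le> a
          \<and> (\<forall>u \<in> V. degree (insert e (S j')) u \<le> 2 * d)
          \<and> j' \<in> Jset vs E t d a S e
          \<and> card {j \<in> Jset vs E t d a S e. j < j'} \<le> d)
        \<and> inv_st V a d (set (take (Suc k) es)) (state vs E d a es (Suc k))"
proof -
  define S where "S = state vs E d a es k"
  define e where "e = es ! k"
  define v where "v = low_v vs e"
  define T where "T = set (take k es)"
  have eE: "e \<in> E" unfolding e_def using nth_mem[OF k] es_facts(2) by simp
  have eT: "e \<notin> T"
  proof
    assume "e \<in> T"
    then obtain p where p: "p < k" "p < length es" "es ! p = e" using in_take[of e k es] unfolding T_def by blast
    have "p = k" using nth_eq_iff_index_eq[OF es_facts(1) p(2) k] p(3) unfolding e_def by simp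
    then show False using p(1) by simp
  qed
  have TE: "T \<subseteq> E" unfolding T_def using es_facts set_take_subset by metis
  obtain w where w: "e = {v, w}" "w \<noteq> v" "w \<in> V" "pos vs v < pos vs w"
    using other[OF eE] unfolding v_def by blast
  have vV: "v \<in> V" using w eE E_sub by auto
  have pv: "pos vs v = low_idx vs e" using low_facts[OF eE] unfolding v_def by simp
  have before: "low_idx vs f \<le> low_idx vs e \<and> (low_idx vs f = low_idx vs e \<longrightarrow> t f < t e)"
    if fT0: "f \<in> T" for f
  proof -
    obtain p where p: "p < k" "es ! p = f" using in_take[of f k es] fT0 unfolding T_def by blast
    show ?thesis using es_order[OF p(1) k] p(2) unfolding e_def by auto
  qed
  have Ssub: "\<And>j. S j \<subseteq> T" and Srange: "\<And>j. S j \<noteq> {} \<Longrightarrow> 1 \<le> j \<and> j \<le> a"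
    and Sun: "(\<Union>j\<in>{1..a}. S j) = T" and Sdis: "\<And>i j. i \<noteq> j \<Longrightarrow> S i \<inter> S j = {}"
    and Sdeg: "\<And>j u. u \<in> V \<Longrightarrow> degree (S j) u \<le> 2 * d"
    using I unfolding inv_st_def S_def T_def by auto
  have finSI: "\<And>j. finite (S j \<inter> inc E v)" using fin_inc by blast
  have exist: "\<exists>j. 1 \<le> j \<and> j \<le> a \<and> card (S j \<inter> inc E v) \<le> 2 * d - 1"
  proof (rule ccontr)
    assume "\<not> ?thesis"
    then have ge: "\<And>j. j \<in> {1..a} \<Longrightarrow> 2 * d \<le> card (S j \<inter> inc E v)" using d1 by force
    have "(\<Sum>j\<in>{1..a}. card (S j \<inter> inc E v)) = card (\<Union>j\<in>{1..a}. S j \<inter> inc E v)"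
      by (rule card_UN_disjoint[symmetric]) (use finSI Sdis in auto)
    also have "\<dots> \<le> card (inc E v - {e})"
      by (rule card_mono) (use fin_inc Sun eT in auto)
    also have "\<dots> = card (inc E v) - 1" using eE w by (simp add: inc_def)
    also have "\<dots> \<le> 2 * d * a - 1" using deg_bound[OF vV] by simp
    finally have A: "(\<Sum>j\<in>{1..a}. card (S j \<inter> inc E v)) \<le> 2 * d * a - 1" .
    have "(\<Sum>j\<in>{1..a}. 2 * d) \<le> (\<Sum>j\<in>{1..a}. card (S j \<inter> inc E v))"
      by (rule sum_mono) (rule ge)
    then have "2 * d * a \<le> (\<Sum>j\<in>{1..a}. card (S j \<inter> inc E v))" by (simp add: mult.commute)
    moreover have "2 * d * a \<ge> 1" using d1 a1 by simp
    ultimately show False using A by linarith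
  qed
  define j' where "j' = choice vs E d a S e"
  have j'P: "1 \<le> j' \<and> j' \<le> a \<and> card (S j' \<inter> inc E v) \<le> 2 * d - 1"
    unfolding j'_def choice_def v_def by (rule LeastI_ex) (use exist in \<open>simp add: v_def\<close>)
  have jmin: "\<And>j. j < j' \<Longrightarrow> \<not> (1 \<le> j \<and> j \<le> a \<and> card (S j \<inter> inc E v) \<le> 2 * d - 1)"
    unfolding j'_def choice_def v_def by (rule not_less_Least)
  have SjE: "\<And>j. S j \<subseteq> E" using Ssub TE by blast
  have degs: "\<forall>u \<in> V. degree (insert e (S j')) u \<le> 2 * d"
  proof
    fix u assume uV: "u \<in> V"
    show "degree (insert e (S j')) u \<le> 2 * d"
    proof (cases "u = v")
      case True
      have "inc (insert e (S j')) u = insert e (S j' \<inter> inc E v)"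
        using True SjE w unfolding inc_def by auto
      then have "degree (insert e (S j')) u \<le> Suc (card (S j' \<inter> inc E v))"
        unfolding degree_def using card_insert_le' finSI by metis
      then show ?thesis using j'P d1 by linarith
    next
      case False
      show ?thesis
      proof (cases "u = w")
        case True
        have "inc (insert e (S j')) u \<subseteq> insert e {f \<in> E. w \<in> f \<and> low_idx vs f < pos vs w}"
        proof
          fix f assume f: "f \<in> inc (insert e (S j')) u"
          show "f \<in> insert e {f \<in> E. w \<in> f \<and> low_idx vs f < pos vs w}"
          proof (cases "f = e")
            case False
            then have "f \<in> S j'" "w \<in> f" using f True unfolding inc_def by auto
            then have "f \<in> T" "f \<in> E" using Ssub SjE by auto
            then have "low_idx vs f < pos vs w" using before pv w(4) by fastforce
            then show ?thesis using \<open>f \<in> E\<close> \<open>w \<in> f\<close> by auto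
          qed simp
        qed
        then have "degree (insert e (S j')) u \<le> card (insert e {f \<in> E. w \<in> f \<and> low_idx vs f < pos vs w})"
          unfolding degree_def by (rule card_mono[rotated]) (use finE in auto)
        also have "\<dots> \<le> Suc (card {f \<in> E. w \<in> f \<and> low_idx vs f < pos vs w})"
          by (rule card_insert_le') (use finE in auto)
        also have "\<dots> \<le> Suc d" using back_bound[OF w(3)] by simp
        finally show ?thesis using d1 by linarith
      next
        case False
        then have "u \<notin> e" using \<open>u \<noteq> v\<close> w by auto
        then have "inc (insert e (S j')) u = inc (S j') u" unfolding inc_def by auto
        then show ?thesis using Sdeg[OF uV] unfolding degree_def by metis
      qed
    qed
  qed
  have PrevSub: "Prev E t e v \<subseteq> inc E v" unfolding Prev_def by auto
  have jJ: "j' \<in> Jset vs E t d a S e"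
  proof -
    have "card (S j' \<inter> Prev E t e v) \<le> card (S j' \<inter> inc E v)"
      by (rule card_mono) (use finSI PrevSub in auto)
    then show ?thesis using j'P unfolding Jset_def v_def by auto
  qed
  define C where "C = {j \<in> Jset vs E t d a S e. j < j'}"
  define Bk where "Bk = {f \<in> E. v \<in> f \<and> low_idx vs f < pos vs v}"
  have exC: "\<exists>f. f \<in> S j \<inter> Bk" if jC: "j \<in> C" for j
  proof -
    have j: "1 \<le> j" "j \<le> a" "card (S j \<inter> Prev E t e v) \<le> 2 * d - 1" "j < j'"
      using jC unfolding C_def Jset_def v_def by auto
    then have nc: "\<not> card (S j \<inter> inc E v) \<le> 2 * d - 1" using jmin by blast
    have "\<not> S j \<inter> inc E v \<subseteq> S j \<inter> Prev E t e v"
    proof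
      assume "S j \<inter> inc E v \<subseteq> S j \<inter> Prev E t e v"
      then have "card (S j \<inter> inc E v) \<le> card (S j \<inter> Prev E t e v)"
        by (rule card_mono[rotated]) (use fin_inc PrevSub finite_subset in blast)
      then show False using nc j(3) by linarith
    qed
    then obtain f where f: "f \<in> S j" "f \<in> inc E v" "\<not> t f < t e" unfolding Prev_def by auto
    have fT: "f \<in> T" and fE: "f \<in> E" using f Ssub SjE by auto
    have "f \<noteq> e" using fT eT by auto
    then have "t f \<noteq> t e" using tinj fE eE inj_on_def by metis
    then have "low_idx vs f < pos vs v" using before[OF fT] f(3) pv by auto
    then have "f \<in> Bk" unfolding Bk_def using fE f(2) unfolding inc_def by auto
    then show ?thesis using f(1) by blast
  qed
  define g where "g j = (SOME f. f \<in> S j \<inter> Bk)" for j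
  have gP: "g j \<in> S j \<inter> Bk" if "j \<in> C" for j
    unfolding g_def using exC[OF that] by (rule someI_ex)
  have "inj_on g C"
  proof (rule inj_onI)
    fix i j assume "i \<in> C" "j \<in> C" "g i = g j"
    then show "i = j" using gP[of i] gP[of j] Sdis[of i j] by auto
  qed
  then have "card C \<le> card Bk"
    by (rule card_inj_on_le) (use gP finE in \<open>auto simp: Bk_def\<close>)
  also have "\<dots> \<le> d" unfolding Bk_def by (rule back_bound[OF vV])
  finally have cardC: "card C \<le> d" .
  define S' where "S' = S(j' := insert e (S j'))"
  have stS: "state vs E d a es (Suc k) = S'"
    using state_Suc[OF k] unfolding S'_def step_def S_def e_def j'_def Let_def by simp
  have tk: "set (take (Suc k) es) = insert e T"
    unfolding T_def e_def using k by (simp add: take_Suc_conv_app_nth)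
  have inv': "inv_st V a d (insert e T) S'"
    unfolding inv_st_def
  proof (intro conjI)
    show "\<forall>j. S' j \<subseteq> insert e T" unfolding S'_def using Ssub by auto
    show "\<forall>j. S' j \<noteq> {} \<longrightarrow> 1 \<le> j \<and> j \<le> a" unfolding S'_def using Srange j'P by auto
    show "(\<Union>j\<in>{1..a}. S' j) = insert e T"
    proof
      show "(\<Union>j\<in>{1..a}. S' j) \<subseteq> insert e T" unfolding S'_def using Ssub by auto
      show "insert e T \<subseteq> (\<Union>j\<in>{1..a}. S' j)"
      proof
        fix f assume "f \<in> insert e T"
        then show "f \<in> (\<Union>j\<in>{1..a}. S' j)"
        proof
          assume "f = e" then show ?thesis using j'P unfolding S'_def by auto
        next
          assume "f \<in> T"
          then obtain j where "j \<in> {1..a}" "f \<in> S j" using Sun by auto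
          then show ?thesis unfolding S'_def
            by (cases "j = j'") auto
        qed
      qed
    qed
    show "\<forall>i j. i \<noteq> j \<longrightarrow> S' i \<inter> S' j = {}"
      unfolding S'_def using Sdis Ssub eT by auto
    show "\<forall>j. \<forall>u\<in>V. degree (S' j) u \<le> 2 * d"
      unfolding S'_def using degs Sdeg by auto
  qed
  have P: "(\<exists>j. 1 \<le> j \<and> j \<le> a \<and> card (S j \<inter> inc E v) \<le> 2 * d - 1)
          \<and> 1 \<le> j' \<and> j' \<le> a
          \<and> (\<forall>u \<in> V. degree (insert e (S j')) u \<le> 2 * d)
          \<and> j' \<in> Jset vs E t d a S e
          \<and> card {j \<in> Jset vs E t d a S e. j < j'} \<le> d"
    using exist j'P degs jJ cardC unfolding C_def by auto
  show ?thesis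
    using P inv' stS tk unfolding Let_def S_def e_def v_def j'_def by simp
qed

lemma inv_all: "k \<le> length es \<Longrightarrow> inv_st V a d (set (take k es)) (state vs E d a es k)"
proof (induction k)
  case 0
  then show ?case unfolding inv_st_def state_def degree_def inc_def by simp
next
  case (Suc k)
  then show ?case using step_lemma[of k] by simp
qed

end

theorem lemma1:
  fixes V :: "'a set" and E :: "'a set set" and vs :: "'a list"
    and t :: "'a set \<Rightarrow> 'b::linorder" and d a :: nat and es :: "'a set list"
  assumes "d \<ge> 1" and "a \<ge> 1"
    and "simple_graph V E"
    and "max_degree V E = 2 * d * a"
    and "inj_on t E"
    and "distinct vs" and "set vs = V"
    and "degenerate_order vs E d"
    and "processing_order vs t E es"
  shows
    "(\<forall>k < length es.
        let S = state vs E d a es k; e = es ! k; v = low_v vs e; j' = choice vs E d a S e in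
          (\<exists>j. 1 \<le> j \<and> j \<le> a \<and> card (S j \<inter> inc E v) \<le> 2 * d - 1)
          \<and> 1 \<le> j' \<and> j' \<le> a
          \<and> (\<forall>u \<in> V. degree (insert e (S j')) u \<le> 2 * d)
          \<and> j' \<in> Jset vs E t d a S e
          \<and> card {j \<in> Jset vs E t d a S e. j < j'} \<le> d)
     \<and> (let S = state vs E d a es (length es) in
          (\<Union>j \<in> {1..a}. S j) = E
          \<and> (\<forall>i \<in> {1..a}. \<forall>j \<in> {1..a}. i \<noteq> j \<longrightarrow> S i \<inter> S j = {})
          \<and> (\<forall>j \<in> {1..a}. \<forall>u \<in> V. degree (S j) u \<le> 2 * d))"
proof
  show "\<forall>k < length es.
        let S = state vs E d a es k; e = es ! k; v = low_v vs e; j' = choice vs E d a S e in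
          (\<exists>j. 1 \<le> j \<and> j \<le> a \<and> card (S j \<inter> inc E v) \<le> 2 * d - 1)
          \<and> 1 \<le> j' \<and> j' \<le> a
          \<and> (\<forall>u \<in> V. degree (insert e (S j')) u \<le> 2 * d)
          \<and> j' \<in> Jset vs E t d a S e
          \<and> card {j \<in> Jset vs E t d a S e. j < j'} \<le> d"
  proof (intro allI impI)
    fix k assume k: "k < length es"
    have "inv_st V a d (set (take k es)) (state vs E d a es k)"
      using inv_all[OF assms] k by simp
    from step_lemma[OF assms k this] show "let S = state vs E d a es k; e = es ! k; v = low_v vs e; j' = choice vs E d a S e in
          (\<exists>j. 1 \<le> j \<and> j \<le> a \<and> card (S j \<inter> inc E v) \<le> 2 * d - 1)
          \<and> 1 \<le> j' \<and> j' \<le> a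
          \<and> (\<forall>u \<in> V. degree (insert e (S j')) u \<le> 2 * d)
          \<and> j' \<in> Jset vs E t d a S e
          \<and> card {j \<in> Jset vs E t d a S e. j < j'} \<le> d" by blast
  qed
next
  have "inv_st V a d (set (take (length es) es)) (state vs E d a es (length es))"
    using inv_all[OF assms order_refl] by simp
  moreover have "set es = E" using assms(9) unfolding processing_order_def by auto
  ultimately show "let S = state vs E d a es (length es) in
          (\<Union>j \<in> {1..a}. S j) = E
          \<and> (\<forall>i \<in> {1..a}. \<forall>j \<in> {1..a}. i \<noteq> j \<longrightarrow> S i \<inter> S j = {})
          \<and> (\<forall>j \<in> {1..a}. \<forall>u \<in> V. degree (S j) u \<le> 2 * d)"
    unfolding inv_st_def Let_def by auto
qed

end
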